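(* Let $p$ be a prime and let $n,\alpha$ be positive integers with $n<p^\alpha$. Let $$J=\{\,j\in\mathbb{Z}:\ 1\le j<p^\alpha,\ p^\alpha-n\in\operatorname{cous}(p^\alpha-j)\,\}.$$ For $j\in J$ write $j-1=\sum_{i=0}^{\alpha-1}j_ip^i$ with $0\le j_i<p$. Then $$n=\sum_{j\in J}\ \prod_{i=0}^{\alpha-1}(j_i+1).$$
   Context: For a positive integer $m$ with base-$p$ expansion $m=m_kp^k+m_{k-1}p^{k-1}+\dots+m_0$ ($0\le m_i<p$, $m_k\ne0$), the set of cousins of $m$ is $\operatorname{cous}(m)=\{m_kp^k+\epsilon_{k-1}m_{k-1}p^{k-1}+\dots+\epsilon_0m_0:\ \epsilon_i\in\{1,-1\}\}$. *)

theory Defs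
  imports "HOL-Computational_Algebra.Primes"
begin

text \<open>Index of the leading base-p digit of m (for p >= 2, m >= 1): the largest k with p^k <= m.\<close>
definition topdeg :: "nat \<Rightarrow> nat \<Rightarrow> nat" where
  "topdeg p m = (GREATEST k. p ^ k \<le> m)"

definition digit :: "nat \<Rightarrow> nat \<Rightarrow> nat \<Rightarrow> nat" where
  "digit p m i = m div p ^ i mod p"

definition cous :: "nat \<Rightarrow> nat \<Rightarrow> int set" where
  "cous p m = {x. \<exists>\<epsilon>::nat \<Rightarrow> int. (\<forall>i. \<epsilon> i \<in> {1, -1}) \<and>
      x = int (digit p m (topdeg p m)) * int p ^ topdeg p m
          + (\<Sum>i<topdeg p m. \<epsilon> i * int (digit p m i) * int p ^ i)}"

end

theory Submission imports Defs begin

definition SS :: "nat \<Rightarrow> nat \<Rightarrow> nat \<Rightarrow> int set" where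
  "SS p a m = {x. \<exists>\<epsilon>::nat\<Rightarrow>int. (\<forall>i. \<epsilon> i \<in> {1,-1}) \<and> x = (\<Sum>i<a. \<epsilon> i * int (digit p m i) * int p ^ i)}"
definition ww :: "nat \<Rightarrow> nat \<Rightarrow> nat \<Rightarrow> nat" where
  "ww p a m = (\<Prod>i<a. p - digit p m i)"
definition FF :: "nat \<Rightarrow> nat \<Rightarrow> int \<Rightarrow> int" where
  "FF p a t = (\<Sum>m<p^a. if t \<in> SS p a m then int (ww p a m) else 0)"

lemma sum_split_add: "(\<Sum>m<a+b. f m) = (\<Sum>m<a. f m) + (\<Sum>m<b. f (a + m::nat))"
  by (induction b) (auto simp: add.commute add.left_commute)

lemma sum_split_digit: "(\<Sum>m<p*P. f m) = (\<Sum>m0<p. \<Sum>m'<P. f (m0 + p*m'::nat))"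
proof (induction P)
  case 0 then show ?case by simp
next
  case (Suc P)
  have "p * Suc P = p*P + p" by simp
  then have "(\<Sum>m<p*Suc P. f m) = (\<Sum>m<p*P. f m) + (\<Sum>m<p. f (p*P + m))"
    using sum_split_add by metis
  also have "\<dots> = (\<Sum>m0<p. (\<Sum>m'<P. f (m0 + p*m')) + f (m0 + p*P))"
    using Suc by (simp add: sum.distrib add.commute)
  finally show ?case by simp
qed

lemma digit0: "m0 < p \<Longrightarrow> digit p (m0 + p*m') 0 = m0"
  by (simp add: digit_def)

lemma digitSuc: "m0 < p \<Longrightarrow> digit p (m0 + p*m') (Suc i) = digit p m' i"
proof -
  assume h: "m0 < p"
  then have "(m0 + p*m') div p = m'" by simp
  then show ?thesis unfolding digit_def
    by (metis div_mult2_eq power_Suc mult.commute)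
qed

lemma SS_Suc:
  assumes "m0 < p"
  shows "x \<in> SS p (Suc a) (m0 + p*m') \<longleftrightarrow> (\<exists>e\<in>{1,-1}. \<exists>y\<in>SS p a m'. x = e * int m0 + int p * y)"
proof
  assume "x \<in> SS p (Suc a) (m0 + p*m')"
  then obtain \<epsilon> where e: "\<forall>i. \<epsilon> i \<in> {1,-1}" and x: "x = (\<Sum>i<Suc a. \<epsilon> i * int (digit p (m0 + p*m') i) * int p ^ i)"
    unfolding SS_def by blast
  have "x = \<epsilon> 0 * int m0 + int p * (\<Sum>i<a. \<epsilon> (Suc i) * int (digit p m' i) * int p ^ i)"
    unfolding x sum.lessThan_Suc_shift digit0[OF assms] digitSuc[OF assms]
    by (simp add: sum_distrib_left mult_ac)
  moreover have "(\<Sum>i<a. \<epsilon> (Suc i) * int (digit p m' i) * int p ^ i) \<in> SS p a m'"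
    unfolding SS_def using e by (intro CollectI exI[of _ "\<lambda>i. \<epsilon> (Suc i)"]) auto
  ultimately show "\<exists>e\<in>{1,-1}. \<exists>y\<in>SS p a m'. x = e * int m0 + int p * y" using e by blast
next
  assume "\<exists>e\<in>{1,-1}. \<exists>y\<in>SS p a m'. x = e * int m0 + int p * y"
  then obtain e y where e: "e \<in> {1,-1}" and y: "y \<in> SS p a m'" and x: "x = e * int m0 + int p * y" by blast
  from y obtain \<epsilon> where ep: "\<forall>i. \<epsilon> i \<in> {1,-1}" and yy: "y = (\<Sum>i<a. \<epsilon> i * int (digit p m' i) * int p ^ i)"
    unfolding SS_def by blast
  define \<delta> where "\<delta> = case_nat e \<epsilon>"
  have "\<forall>i. \<delta> i \<in> {1,-1}" using e ep by (auto simp: \<delta>_def split: nat.split)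
  moreover have "x = (\<Sum>i<Suc a. \<delta> i * int (digit p (m0 + p*m') i) * int p ^ i)"
    unfolding sum.lessThan_Suc_shift x yy digit0[OF assms] digitSuc[OF assms]
    by (simp add: sum_distrib_left mult_ac \<delta>_def)
  ultimately show "x \<in> SS p (Suc a) (m0 + p*m')" unfolding SS_def by blast
qed

lemma ww_Suc: "m0 < p \<Longrightarrow> ww p (Suc a) (m0 + p*m') = (p - m0) * ww p a m'"
  unfolding ww_def prod.lessThan_Suc_shift by (simp add: digit0 digitSuc)

lemma SS_parity:
  assumes "x \<in> SS p a m"
  shows "even (x - (\<Sum>i<a. int (digit p m i) * int p ^ i))"
proof -
  obtain \<epsilon> where e: "\<forall>i. \<epsilon> i \<in> {1,-1}" and x: "x = (\<Sum>i<a. \<epsilon> i * int (digit p m i) * int p ^ i)"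
    using assms unfolding SS_def by blast
  have "x - (\<Sum>i<a. int (digit p m i) * int p ^ i) = (\<Sum>i<a. (\<epsilon> i - 1) * int (digit p m i) * int p ^ i)"
    unfolding x sum_subtractf[symmetric] by (rule sum.cong) (auto simp: algebra_simps)
  also have "even \<dots>"
  proof (rule dvd_sum)
    fix i assume "i \<in> {..<a}"
    have "even (\<epsilon> i - 1)" using e[rule_format, of i] by auto
    then show "even ((\<epsilon> i - 1) * int (digit p m i) * int p ^ i)" by simp
  qed
  finally show ?thesis .
qed

lemma SS_not_consec: "q \<in> SS p a m \<Longrightarrow> q + 1 \<in> SS p a m \<Longrightarrow> False"
  using SS_parity[of q p a m] SS_parity[of "q+1" p a m] by presburger


lemma mem_char:
  fixes t :: int and Y :: "int set"
  assumes "m0 < p"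
  shows "(\<exists>e\<in>{1,-1}. \<exists>y\<in>Y. t = e * int m0 + int p * y) \<longleftrightarrow>
    (int m0 = t mod int p \<and> t div int p \<in> Y) \<or> (0 < t mod int p \<and> int m0 = int p - t mod int p \<and> t div int p + 1 \<in> Y)"
proof
  assume "\<exists>e\<in>{1,-1}. \<exists>y\<in>Y. t = e * int m0 + int p * y"
  then obtain e y where e: "e \<in> {1,-1}" and y: "y \<in> Y" and t: "t = e * int m0 + int p * y" by blast
  show "(int m0 = t mod int p \<and> t div int p \<in> Y) \<or> (0 < t mod int p \<and> int m0 = int p - t mod int p \<and> t div int p + 1 \<in> Y)"
  proof (cases "e = 1")
    case True
    then have "t = int m0 + int p * y" using t by simp
    then have "t mod int p = int m0" "t div int p = y" using assms by auto
    then show ?thesis using y by simp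
  next
    case False
    then have t': "t = - int m0 + int p * y" using t e by simp
    show ?thesis
    proof (cases "m0 = 0")
      case True
      then show ?thesis using t' y assms by simp
    next
      case False
      obtain c where c: "c = int p - int m0" by blast
      have t2: "t = c + int p * (y - 1)" using t' c by (simp add: algebra_simps)
      have c0: "0 \<le> c" "c < int p" using assms False c by auto
      have "t mod int p = c mod int p" unfolding t2 by simp
      also have "\<dots> = c" using c0 by simp
      finally have m: "t mod int p = c" .
      have "t div int p = c div int p + (y - 1)" unfolding t2 using c0 by simp
      also have "c div int p = 0" using c0 by simp
      finally have "t mod int p = int p - int m0" "t div int p = y - 1" using m c by auto
      then show ?thesis using y False assms by simp
    qed
  qed
next
  have p0: "0 < int p" using assms by simp
  assume "(int m0 = t mod int p \<and> t div int p \<in> Y) \<or> (0 < t mod int p \<and> int m0 = int p - t mod int p \<and> t div int p + 1 \<in> Y)"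
  then show "\<exists>e\<in>{1,-1}. \<exists>y\<in>Y. t = e * int m0 + int p * y"
  proof
    assume h: "int m0 = t mod int p \<and> t div int p \<in> Y"
    have "t = 1 * int m0 + int p * (t div int p)" using h by simp
    then show ?thesis using h by blast
  next
    assume h: "0 < t mod int p \<and> int m0 = int p - t mod int p \<and> t div int p + 1 \<in> Y"
    have d: "int p * (t div int p) + t mod int p = t" by (rule mult_div_mod_eq)
    have "t = -1 * int m0 + int p * (t div int p + 1)" using h d
      by (simp add: distrib_left)
    then show ?thesis using h by blast
  qed
qed

lemma arith_step:
  fixes p P q r :: int
  assumes "0 \<le> r" "r < p" "0 < P"
  shows "(p - r) * max 0 (P - \<bar>q\<bar>) + r * max 0 (P - \<bar>q + 1\<bar>) = max 0 (p * P - \<bar>p * q + r\<bar>)"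
proof -
  consider "P \<le> q" | "0 \<le> q \<and> q < P" | "-P \<le> q \<and> q < 0" | "q < -P" by linarith
  then show ?thesis
  proof cases
    case 1
    have "p * P \<le> p * q" using 1 assms by (intro mult_left_mono) auto
    have a: "max 0 (P - \<bar>q\<bar>) = 0" "max 0 (P - \<bar>q+1\<bar>) = 0" using 1 assms by auto
    have "0 \<le> p * q + r" using \<open>p * P \<le> p * q\<close> assms mult_pos_pos[of p P] by linarith
    moreover have "p * P - (p * q + r) \<le> 0" using assms \<open>p * P \<le> p * q\<close> by linarith
    ultimately have "max 0 (p * P - \<bar>p * q + r\<bar>) = 0" by simp
    then show ?thesis using a by simp
  next
    case 2
    have "0 \<le> p * q" using 2 assms by simp
    have "p*q + p \<le> p * P" using 2 assms mult_left_mono[of "q+1" P p] by (simp add: algebra_simps)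
    then show ?thesis using 2 assms \<open>0 \<le> p*q\<close> by (simp add: algebra_simps)
  next
    case 3
    have "p * q \<le> - p" using 3 assms mult_left_mono[of q "-1" p] by simp
    have "- (p*P) \<le> p * q" using 3 assms mult_left_mono[of "-P" q p] by simp
    then show ?thesis using 3 assms \<open>p*q \<le> -p\<close> by (simp add: algebra_simps)
  next
    case 4
    have "p * q + p \<le> - (p*P)" using 4 assms mult_left_mono[of "q+1" "-P" p] by (simp add: algebra_simps)
    then show ?thesis using 4 assms by (simp add: algebra_simps)
  qed
qed


lemma sum_delta_int:
  fixes X :: int and k :: int
  assumes "0 \<le> k" "k < int p"
  shows "(\<Sum>m0<p. int (p - m0) * (if int m0 = k then X else 0)) = (int p - k) * X"
proof -
  have "(\<Sum>m0<p. int (p - m0) * (if int m0 = k then X else 0)) = (\<Sum>m0<p. if m0 = nat k then int (p - m0) * X else 0)"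
    using assms by (intro sum.cong) auto
  also have "\<dots> = int (p - nat k) * X" using assms by simp
  also have "\<dots> = (int p - k) * X" using assms by simp
  finally show ?thesis .
qed

lemma FF_eq:
  assumes p: "2 \<le> p"
  shows "FF p a t = max 0 (int p ^ a - \<bar>t\<bar>)"
proof (induction a arbitrary: t)
  case 0
  have "SS p 0 0 = {0}" unfolding SS_def by auto
  then have "FF p 0 t = (if t = 0 then 1 else 0)" unfolding FF_def ww_def by simp
  then show ?case by auto
next
  case (Suc a)
  define r where "r = t mod int p"
  define q where "q = t div int p"
  have r0: "0 \<le> r" "r < int p" using p unfolding r_def by auto
  have tq: "t = int p * q + r" unfolding r_def q_def by simp
  let ?G = "\<lambda>m. if t \<in> SS p (Suc a) m then int (ww p (Suc a) m) else 0"
  have G: "?G (m0 + p*m') = int (p - m0) * ((if int m0 = r \<and> q \<in> SS p a m' then int (ww p a m') else 0)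
     + (if 0 < r \<and> int m0 = int p - r \<and> q + 1 \<in> SS p a m' then int (ww p a m') else 0))"
    if m0: "m0 < p" for m0 m'
  proof -
    have iff: "t \<in> SS p (Suc a) (m0 + p*m') \<longleftrightarrow> (int m0 = r \<and> q \<in> SS p a m') \<or> (0 < r \<and> int m0 = int p - r \<and> q + 1 \<in> SS p a m')"
      unfolding SS_Suc[OF m0] mem_char[OF m0] r_def q_def ..
    have disj: "\<not> ((int m0 = r \<and> q \<in> SS p a m') \<and> (0 < r \<and> int m0 = int p - r \<and> q + 1 \<in> SS p a m'))"
      using SS_not_consec by blast
    show ?thesis unfolding iff ww_Suc[OF m0] using disj by auto
  qed
  have "FF p (Suc a) t = (\<Sum>m0<p. \<Sum>m'<p^a. ?G (m0 + p*m'))"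
    unfolding FF_def power_Suc by (rule sum_split_digit)
  also have "\<dots> = (\<Sum>m0<p. int (p - m0) * ((if int m0 = r then FF p a q else 0) + (if 0 < r \<and> int m0 = int p - r then FF p a (q+1) else 0)))"
  proof (rule sum.cong[OF refl])
    fix m0 assume "m0 \<in> {..<p}"
    then have m0: "m0 < p" by simp
    have "(\<Sum>m'<p^a. ?G (m0 + p*m')) = int (p - m0) * ((\<Sum>m'<p^a. if int m0 = r \<and> q \<in> SS p a m' then int (ww p a m') else 0)
     + (\<Sum>m'<p^a. if 0 < r \<and> int m0 = int p - r \<and> q + 1 \<in> SS p a m' then int (ww p a m') else 0))"
      unfolding G[OF m0] sum_distrib_left[symmetric] sum.distrib ..
    also have "\<dots> = int (p - m0) * ((if int m0 = r then FF p a q else 0) + (if 0 < r \<and> int m0 = int p - r then FF p a (q+1) else 0))"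
      unfolding FF_def by auto
    finally show "(\<Sum>m'<p^a. ?G (m0 + p*m')) = int (p - m0) * ((if int m0 = r then FF p a q else 0) + (if 0 < r \<and> int m0 = int p - r then FF p a (q+1) else 0))" .
  qed
  also have "\<dots> = (\<Sum>m0<p. int (p - m0) * (if int m0 = r then FF p a q else 0)) + (\<Sum>m0<p. int (p - m0) * (if int m0 = (if 0 < r then int p - r else -1) then FF p a (q+1) else 0))"
    unfolding sum.distrib[symmetric] distrib_left by (intro sum.cong) auto
  also have "\<dots> = (int p - r) * FF p a q + r * FF p a (q+1)"
  proof (cases "0 < r")
    case True
    have "(\<Sum>m0<p. int (p - m0) * (if int m0 = (if 0 < r then int p - r else -1) then FF p a (q+1) else 0))
      = (\<Sum>m0<p. int (p - m0) * (if int m0 = int p - r then FF p a (q+1) else 0))" using True by simp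
    also have "\<dots> = (int p - (int p - r)) * FF p a (q+1)" by (rule sum_delta_int) (use True r0 in auto)
    finally show ?thesis using sum_delta_int[OF r0, of "FF p a q"] by simp
  next
    case False
    have "(\<Sum>m0<p. int (p - m0) * (if int m0 = (if 0 < r then int p - r else -1) then FF p a (q+1) else 0)) = 0"
      using False by (intro sum.neutral) auto
    then show ?thesis using sum_delta_int[OF r0, of "FF p a q"] False r0 by simp
  qed
  also have "\<dots> = max 0 (int p * int p ^ a - \<bar>int p * q + r\<bar>)"
    unfolding Suc.IH by (rule arith_step) (use r0 p in auto)
  finally show ?case unfolding tq by simp
qed


lemma topdeg_props:
  assumes p: "2 \<le> p" and m: "1 \<le> m"
  shows "p ^ topdeg p m \<le> m" "m < p ^ Suc (topdeg p m)"
proof -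
  have bnd: "k \<le> m" if "p ^ k \<le> m" for k
  proof -
    have "k < 2 ^ k" by (rule less_exp)
    also have "\<dots> \<le> p ^ k" using p by (simp add: power_mono)
    finally show ?thesis using that by simp
  qed
  have P0: "p ^ 0 \<le> m" using m by simp
  show "p ^ topdeg p m \<le> m" unfolding topdeg_def by (rule GreatestI_nat[of "\<lambda>k. p^k \<le> m", OF P0 bnd])
  show "m < p ^ Suc (topdeg p m)"
  proof (rule ccontr)
    assume "\<not> m < p ^ Suc (topdeg p m)"
    then have "Suc (topdeg p m) \<le> topdeg p m" unfolding topdeg_def
      by (intro Greatest_le_nat[of "\<lambda>k. p^k \<le> m" _ m]) (auto intro: bnd)
    then show False by simp
  qed
qed

lemma digit_lt: "0 < p \<Longrightarrow> digit p m i < p"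
  by (simp add: digit_def)

lemma sum_bound:
  assumes p: "0 < p" and e: "\<forall>i. \<epsilon> i \<in> {1,-1::int}"
  shows "\<bar>\<Sum>i<k. \<epsilon> i * int (digit p m i) * int p ^ i\<bar> < int p ^ k"
proof (induction k)
  case 0 then show ?case by simp
next
  case (Suc k)
  have d: "int (digit p m k) \<le> int p - 1" using digit_lt[OF p, of m k] by simp
  have "\<bar>\<epsilon> k * int (digit p m k) * int p ^ k\<bar> = int (digit p m k) * int p ^ k"
    using e[rule_format, of k] by (auto simp: abs_mult)
  also have "\<dots> \<le> (int p - 1) * int p ^ k" using d by (intro mult_right_mono) auto
  finally have "\<bar>\<epsilon> k * int (digit p m k) * int p ^ k\<bar> \<le> (int p - 1) * int p ^ k" .
  then have "\<bar>\<Sum>i<Suc k. \<epsilon> i * int (digit p m i) * int p ^ i\<bar> < int p ^ k + (int p - 1) * int p ^ k"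
    using Suc.IH by (simp add: abs_triangle_ineq order_le_less_trans[OF abs_triangle_ineq])
  also have "\<dots> = int p ^ Suc k" by (simp add: algebra_simps)
  finally show ?case .
qed

lemma cous_char:
  assumes p: "2 \<le> p" and m: "1 \<le> m" "m < p ^ a" and t: "0 < t"
  shows "t \<in> cous p m \<longleftrightarrow> t \<in> SS p a m"
proof -
  define k where "k = topdeg p m"
  have k1: "p ^ k \<le> m" and k2: "m < p ^ Suc k" using topdeg_props[OF p m(1)] k_def by auto
  have ka: "k < a" using k1 m(2) p by (metis le_less_trans power_less_imp_less_exp less_le_trans one_less_numeral_iff semiring_norm(76))
  have dz: "digit p m i = 0" if "k < i" for i
  proof -
    have "p ^ Suc k \<le> p ^ i" using that p by (intro power_increasing) auto
    then have "m div p ^ i = 0" using k2 by simp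
    then show ?thesis by (simp add: digit_def)
  qed
  have dk: "1 \<le> digit p m k"
  proof -
    have "m div p ^ k < p" using k2 p by (simp add: div_less_iff_less_mult mult.commute)
    moreover have "1 \<le> m div p ^ k"
    proof -
      have "p ^ k div p ^ k \<le> m div p ^ k" using k1 by (rule div_le_mono)
      moreover have "p ^ k div p ^ k = 1" using p by simp
      ultimately show ?thesis by simp
    qed
    ultimately show ?thesis by (simp add: digit_def)
  qed
  have split: "(\<Sum>i<a. \<epsilon> i * int (digit p m i) * int p ^ i) = (\<Sum>i<k. \<epsilon> i * int (digit p m i) * int p ^ i) + \<epsilon> k * int (digit p m k) * int p ^ k" for \<epsilon> :: "nat \<Rightarrow> int"
  proof -
    have "(\<Sum>i<a. \<epsilon> i * int (digit p m i) * int p ^ i) = (\<Sum>i<Suc k. \<epsilon> i * int (digit p m i) * int p ^ i)"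
      by (rule sum.mono_neutral_right) (use ka dz in auto)
    then show ?thesis by simp
  qed
  have cous_eq: "cous p m = {x. \<exists>\<epsilon>::nat \<Rightarrow> int. (\<forall>i. \<epsilon> i \<in> {1, -1}) \<and>
      x = int (digit p m k) * int p ^ k + (\<Sum>i<k. \<epsilon> i * int (digit p m i) * int p ^ i)}"
    unfolding cous_def k_def ..
  show ?thesis
  proof
    assume "t \<in> cous p m"
    then obtain \<epsilon> where e: "\<forall>i. \<epsilon> i \<in> {1::int, -1}" and tt: "t = int (digit p m k) * int p ^ k + (\<Sum>i<k. \<epsilon> i * int (digit p m i) * int p ^ i)"
      unfolding cous_eq by blast
    define \<delta> where "\<delta> = \<epsilon>(k := 1)"
    have "\<forall>i. \<delta> i \<in> {1,-1}" using e by (simp add: \<delta>_def)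
    moreover have "(\<Sum>i<k. \<delta> i * int (digit p m i) * int p ^ i) = (\<Sum>i<k. \<epsilon> i * int (digit p m i) * int p ^ i)"
      by (rule sum.cong) (auto simp: \<delta>_def)
    then have "t = (\<Sum>i<a. \<delta> i * int (digit p m i) * int p ^ i)" unfolding split tt by (simp add: \<delta>_def)
    ultimately show "t \<in> SS p a m" unfolding SS_def by blast
  next
    assume "t \<in> SS p a m"
    then obtain \<epsilon> where e: "\<forall>i. \<epsilon> i \<in> {1::int, -1}" and tt: "t = (\<Sum>i<a. \<epsilon> i * int (digit p m i) * int p ^ i)"
      unfolding SS_def by blast
    have tt2: "t = (\<Sum>i<k. \<epsilon> i * int (digit p m i) * int p ^ i) + \<epsilon> k * int (digit p m k) * int p ^ k"
      using tt split by simp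
    have b: "\<bar>\<Sum>i<k. \<epsilon> i * int (digit p m i) * int p ^ i\<bar> < int p ^ k" using sum_bound[of p \<epsilon>] p e by simp
    have "1 * int p ^ k \<le> int (digit p m k) * int p ^ k" using dk by (intro mult_right_mono) auto
    then have "int p ^ k \<le> int (digit p m k) * int p ^ k" by simp
    have ek: "\<epsilon> k = 1"
    proof (rule ccontr)
      assume "\<epsilon> k \<noteq> 1"
      then have "\<epsilon> k = -1" using e by auto
      then have "t < 0" using tt2 b \<open>int p ^ k \<le> int (digit p m k) * int p ^ k\<close> by simp
      then show False using t by simp
    qed
    show "t \<in> cous p m" unfolding cous_eq using e tt2 ek by auto
  qed
qed

lemma compl_divmod:
  fixes c a b :: nat
  assumes "c < a * b" "0 < b"
  shows "(a*b - 1 - c) div b = a - 1 - c div b" "(a*b - 1 - c) mod b = b - 1 - c mod b"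
proof -
  have cd: "c div b < a" using assms by (simp add: div_less_iff_less_mult)
  have cm: "c mod b < b" using assms by simp
  have e: "a*b - 1 - c = (b - 1 - c mod b) + b * (a - 1 - c div b)"
  proof -
    have c: "c = c mod b + b * (c div b)" by simp
    have aa: "a = (a - 1 - c div b) + c div b + 1" using cd by simp
    have "a * b = ((a - 1 - c div b) + c div b + 1) * b" using aa by simp
    then have "a * b = b * (a - 1 - c div b) + b * (c div b) + b" by (simp add: algebra_simps)
    then show ?thesis using cm by (subst c) (simp add: algebra_simps)
  qed
  have g: "(x + b*y) div b = y" "(x + b*y) mod b = x" if "x < b" for x y using that by simp_all
  have xb: "b - 1 - c mod b < b" using assms by simp
  show "(a*b - 1 - c) div b = a - 1 - c div b" unfolding e by (rule g(1)[OF xb])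
  show "(a*b - 1 - c) mod b = b - 1 - c mod b" unfolding e by (rule g(2)[OF xb])
qed

lemma digit_compl:
  assumes p: "0 < p" and m: "m < p ^ a" and i: "i < a"
  shows "digit p (p ^ a - 1 - m) i = p - 1 - digit p m i"
proof -
  have pa: "p ^ a = p ^ (a - i) * p ^ i" using i by (simp add: power_add[symmetric])
  have "m < p ^ (a - i) * p ^ i" using m pa by simp
  then have "(p ^ a - 1 - m) div p ^ i = p ^ (a - i) - 1 - m div p ^ i"
    unfolding pa by (rule compl_divmod(1)) (use p in simp)
  moreover have "p ^ (a - i) = p ^ (a - i - 1) * p"
  proof -
    have "a - i = Suc (a - i - 1)" using i by simp
    then show ?thesis by (metis power_Suc2)
  qed
  moreover have "m div p ^ i < p ^ (a - i - 1) * p"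
    using m pa \<open>p ^ (a - i) = p ^ (a - i - 1) * p\<close> p by (simp add: div_less_iff_less_mult)
  ultimately show ?thesis unfolding digit_def
    using compl_divmod(2)[of "m div p ^ i" "p ^ (a - i - 1)" p] p by simp
qed


lemma SS_zero: "x \<in> SS p a 0 \<Longrightarrow> x = 0"
  unfolding SS_def digit_def by auto

theorem mainTheorem10:
  fixes p n \<alpha> :: nat
  assumes "prime p" and "0 < n" and "0 < \<alpha>" and "n < p ^ \<alpha>"
  shows "n = (\<Sum>j\<in>{j. 1 \<le> j \<and> j < p ^ \<alpha> \<and> int (p ^ \<alpha> - n) \<in> cous p (p ^ \<alpha> - j)}.
               \<Prod>i<\<alpha>. (digit p (j - 1) i + 1))"
proof -
  have p: "2 \<le> p" using assms(1) prime_ge_2_nat by blast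
  define N where "N = p ^ \<alpha>"
  define t where "t = N - n"
  have t0: "0 < t" "t < N" using assms unfolding t_def N_def by auto
  define M where "M = {m \<in> {..<N}. int t \<in> SS p \<alpha> m}"
  have J: "{j. 1 \<le> j \<and> j < p ^ \<alpha> \<and> int (p ^ \<alpha> - n) \<in> cous p (p ^ \<alpha> - j)} = (\<lambda>m. N - m) ` M"
  proof (rule set_eqI)
    fix j
    show "j \<in> {j. 1 \<le> j \<and> j < p ^ \<alpha> \<and> int (p ^ \<alpha> - n) \<in> cous p (p ^ \<alpha> - j)} \<longleftrightarrow> j \<in> (\<lambda>m. N - m) ` M"
    proof
      assume "j \<in> {j. 1 \<le> j \<and> j < p ^ \<alpha> \<and> int (p ^ \<alpha> - n) \<in> cous p (p ^ \<alpha> - j)}"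
      then have j: "1 \<le> j" "j < N" "int t \<in> cous p (N - j)" unfolding N_def t_def by auto
      have "int t \<in> SS p \<alpha> (N - j)" using cous_char[of p "N - j" \<alpha> "int t"] j p t0 unfolding N_def by auto
      then have "N - j \<in> M" unfolding M_def using j by auto
      moreover have "j = N - (N - j)" using j by simp
      ultimately show "j \<in> (\<lambda>m. N - m) ` M" by blast
    next
      assume "j \<in> (\<lambda>m. N - m) ` M"
      then obtain m where m: "m \<in> M" and jm: "j = N - m" by blast
      have mN: "m < N" and mS: "int t \<in> SS p \<alpha> m" using m unfolding M_def by auto
      have "m \<noteq> 0" using mS SS_zero t0 by fastforce
      then have "int t \<in> cous p m" using cous_char[of p m \<alpha> "int t"] mS mN p t0 unfolding N_def by auto
      moreover have "N - j = m" using jm mN by simp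
      ultimately show "j \<in> {j. 1 \<le> j \<and> j < p ^ \<alpha> \<and> int (p ^ \<alpha> - n) \<in> cous p (p ^ \<alpha> - j)}"
        using jm mN \<open>m \<noteq> 0\<close> unfolding N_def t_def by auto
    qed
  qed
  have inj: "inj_on (\<lambda>m. N - m) M"
    by (rule inj_onI) (auto simp: M_def)
  have "(\<Sum>j\<in>(\<lambda>m. N - m) ` M. \<Prod>i<\<alpha>. (digit p (j - 1) i + 1)) = (\<Sum>m\<in>M. \<Prod>i<\<alpha>. (digit p (N - m - 1) i + 1))"
    by (simp add: sum.reindex[OF inj])
  also have "\<dots> = (\<Sum>m\<in>M. ww p \<alpha> m)"
  proof (rule sum.cong[OF refl])
    fix m assume "m \<in> M"
    then have mN: "m < N" unfolding M_def by auto
    show "(\<Prod>i<\<alpha>. (digit p (N - m - 1) i + 1)) = ww p \<alpha> m"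
      unfolding ww_def
    proof (rule prod.cong[OF refl])
      fix i assume "i \<in> {..<\<alpha>}"
      then have i: "i < \<alpha>" by simp
      have "digit p (N - m - 1) i = p - 1 - digit p m i"
        using digit_compl[of p m \<alpha> i] p mN i unfolding N_def by (simp add: diff_commute)
      moreover have "digit p m i < p" using digit_lt p by auto
      ultimately show "digit p (N - m - 1) i + 1 = p - digit p m i" by simp
    qed
  qed
  finally have eq: "(\<Sum>j\<in>(\<lambda>m. N - m) ` M. \<Prod>i<\<alpha>. (digit p (j - 1) i + 1)) = (\<Sum>m\<in>M. ww p \<alpha> m)" .
  have "int (\<Sum>m\<in>M. ww p \<alpha> m) = (\<Sum>m\<in>M. int (ww p \<alpha> m))" by simp
  also have "\<dots> = FF p \<alpha> (int t)" unfolding FF_def M_def N_def by (rule sum.inter_filter) simp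
  also have "\<dots> = int n" unfolding FF_eq[OF p] using t0 assms unfolding t_def N_def by auto
  finally have "(\<Sum>m\<in>M. ww p \<alpha> m) = n" by (simp only: of_nat_eq_iff)
  then show ?thesis unfolding J eq by simp
qed

end
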